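(* Let $k\ge 1$, $0\le r<k$ and $n\ge 1$ be integers, and let $$C_n(k,r,x)=\left(\binom{ki+r}{i-j}x^k+\binom{k(i+1)+r}{i-j+1}\right)_{i,j=0}^{n-1}.$$ Then $x^r\det C_n(k,r,x)=L^{(k)}_{kn+r}(x)$.
   Context: Binomial coefficients: for integers $m\ge 0$ and $j$, $\binom{m}{j}$ is the usual binomial coefficient, with $\binom{m}{j}=0$ if $j<0$ or $j>m$. For an integer $k\ge1$, the generalized Lucas polynomials $L^{(k)}_n(x)\in\mathbb{Z}[x]$ ($n\ge0$) are defined by $L^{(k)}_0(x)=k$, $L^{(k)}_n(x)=x^n$ for $0<n<k$, and $L^{(k)}_n(x)=xL^{(k)}_{n-1}(x)+L^{(k)}_{n-k}(x)$ for $n\ge k$; equivalently, for $n\ge1$, $L^{(k)}_n(x)=\sum_{j=0}^{\lfloor n/k\rfloor}\frac{n}{n-(k-1)j}\binom{n-(k-1)j}{j}x^{n-kj}$. *)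

theory Defs
  imports "HOL-Computational_Algebra.Polynomial" "Jordan_Normal_Form.Determinant"
begin

definition binom_int :: "nat \<Rightarrow> int \<Rightarrow> int" where
  "binom_int m j = (if j < 0 then 0 else int (m choose nat j))"

fun gen_lucas :: "nat \<Rightarrow> nat \<Rightarrow> int poly" where
  "gen_lucas k n =
     (if n = 0 then [:int k:]
      else if n < k then monom 1 n
      else if k = 0 then 0  \<comment> \<open>k = 0 is outside the definition's scope (k \<ge> 1)\<close>
      else pCons 0 (gen_lucas k (n - 1)) + gen_lucas k (n - k))"

definition C_mat :: "nat \<Rightarrow> nat \<Rightarrow> nat \<Rightarrow> int poly mat" where
  "C_mat k r n = mat n n (\<lambda>(i, j).
      smult (binom_int (k * i + r) (int i - int j)) (monom 1 k)
      + [: binom_int (k * (i + 1) + r) (int i - int j + 1) :])"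

end

theory Submission
  imports Defs
begin


lemma hess_minor:
  fixes f :: "nat \<Rightarrow> nat \<Rightarrow> 'a::idom"
  assumes sup: "\<And>i. f i (Suc i) = 1" and zer: "\<And>i c. c > Suc i \<Longrightarrow> f i c = 0"
  and j: "j \<le> m"
  shows "det (mat_delete (mat (Suc m) (Suc m) (\<lambda>(i,j). f i j)) m j) = det (mat j j (\<lambda>(i,j). f i j))"
proof -
  let ?M = "mat_delete (mat (Suc m) (Suc m) (\<lambda>(i,j). f i j)) m j"
  let ?A1 = "mat j j (\<lambda>(i,j). f i j)"
  let ?A3 = "mat (m-j) j (\<lambda>(a,b). f (a+j) b)"
  let ?A4 = "mat (m-j) (m-j) (\<lambda>(a,b). f (a+j) (Suc (b+j)))"
  have eq: "?M = four_block_mat ?A1 (0\<^sub>m j (m-j)) ?A3 ?A4"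
    by (rule eq_matI, insert j, auto simp: mat_delete_def intro!: zer)
  have "det ?M = det ?A1 * det ?A4"
    unfolding eq by (rule det_four_block_mat_upper_right_zero[of ?A1 j "0\<^sub>m j (m-j)" "m-j" ?A3 ?A4], auto)
  moreover have "det ?A4 = 1"
  proof -
    have "det ?A4 = prod_list (diag_mat ?A4)"
      by (rule det_lower_triangular[of "m-j"], auto intro!: zer)
    also have "diag_mat ?A4 = replicate (m-j) 1"
      by (rule nth_equalityI, auto simp: diag_mat_def sup[simplified] sup)
    finally show ?thesis by simp
  qed
  ultimately show ?thesis by simp
qed

lemma hess_det:
  fixes f :: "nat \<Rightarrow> nat \<Rightarrow> 'a::idom"
  assumes sup: "\<And>i. f i (Suc i) = 1" and zer: "\<And>i c. c > Suc i \<Longrightarrow> f i c = 0"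
  shows "det (mat (Suc m) (Suc m) (\<lambda>(i,j). f i j)) =
     (\<Sum>j\<le>m. (-1)^(m+j) * f m j * det (mat j j (\<lambda>(i,j). f i j)))"
proof -
  let ?A = "mat (Suc m) (Suc m) (\<lambda>(i,j). f i j)"
  have "det ?A = (\<Sum>j<Suc m. ?A $$ (m,j) * cofactor ?A m j)"
    by (rule laplace_expansion_row, auto)
  also have "\<dots> = (\<Sum>j\<le>m. (-1)^(m+j) * f m j * det (mat j j (\<lambda>(i,j). f i j)))"
    unfolding lessThan_Suc_atMost
    by (rule sum.cong, auto simp: cofactor_def hess_minor[where f=f, OF sup zer])
  finally show ?thesis .
qed


abbreviation XX :: "int poly" where "XX \<equiv> [:0,1:]"

lemma monom1: "monom (1::int) n = XX ^ n" by (simp add: monom_altdef)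


definition Lp :: "nat \<Rightarrow> int \<Rightarrow> int poly" where
  "Lp k m = (if m < 0 then 0 else if m = 0 then 1 else gen_lucas k (nat m))"

definition EE :: "nat \<Rightarrow> int \<Rightarrow> int poly" where
  "EE k m = (if m = 0 then 1 else 0) + (if m = int k then of_nat (k - 1) else 0)"

declare gen_lucas.simps[simp del]

lemma gl_pos: "1 \<le> k \<Longrightarrow> n \<ge> 1 \<Longrightarrow> gen_lucas k n =
   (if n < k then XX ^ n else XX * gen_lucas k (n - 1) + gen_lucas k (n - k))"
  by (subst gen_lucas.simps) (simp add: monom1)

lemma gl0: "gen_lucas k 0 = of_nat k"
  by (subst gen_lucas.simps, simp add: of_nat_poly)

lemma Lp_rec: assumes k: "k \<ge> 1"
  shows "Lp k m = XX * Lp k (m - 1) + Lp k (m - int k) + EE k m"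
proof (cases "m \<le> 0")
  case True thus ?thesis using k by (auto simp: Lp_def EE_def)
next
  case False
  define n where "n = nat m"
  have n: "m = int n" "n \<ge> 1" using False unfolding n_def by auto
  show ?thesis
  proof (cases "n < k")
    case True
    have g: "gen_lucas k n = XX ^ n" using gl_pos[OF k n(2)] True by simp
    show ?thesis
    proof (cases "n = 1")
      case True
      then show ?thesis using n k g \<open>n < k\<close> by (simp add: Lp_def EE_def)
    next
      case False
      have g1: "gen_lucas k (n-1) = XX ^ (n-1)" using gl_pos[OF k, of "n-1"] False \<open>n < k\<close> n by simp
      have "nat (m - 1) = n - 1" using n by auto
      moreover have "XX ^ n = XX * XX^(n-1)" using n by (metis Suc_diff_le diff_Suc_1 power_Suc)
      ultimately show ?thesis using n k g g1 False \<open>n < k\<close> by (simp add: Lp_def EE_def)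
    qed
  next
    case False
    have g: "gen_lucas k n = XX * gen_lucas k (n - 1) + gen_lucas k (n - k)"
      using gl_pos[OF k n(2)] False by simp
    have e1: "nat (m - 1) = n - 1" "nat (m - int k) = n - k" using n False by auto
    show ?thesis
    proof (cases "n = k")
      case True
      show ?thesis
      proof (cases "k = 1")
        case True
        then show ?thesis using n g \<open>n = k\<close> by (simp add: Lp_def EE_def gl0)
      next
        case False
        then show ?thesis using n g \<open>n = k\<close> k e1 by (simp add: Lp_def EE_def gl0 of_nat_diff)
      qed
    next
      case False
      with \<open>\<not> n < k\<close> have "n > k" by auto
      then show ?thesis using n k g e1 by (simp add: Lp_def EE_def)
    qed
  qed
qed

lemma pascal_sum:
  fixes g :: "nat \<Rightarrow> 'a::comm_ring_1"
  shows "(\<Sum>i\<le>Suc p. (-1)^i * of_nat (Suc p choose i) * g i) =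
         (\<Sum>i\<le>p. (-1)^i * of_nat (p choose i) * (g i - g (Suc i)))"
proof -
  have A: "(\<Sum>i\<le>Suc p. (-1)^i * of_nat (Suc p choose i) * g i) =
     g 0 - (\<Sum>i\<le>p. (-1)^i * of_nat (p choose i) * g (Suc i))
         - (\<Sum>i\<le>p. (-1)^i * of_nat (p choose Suc i) * g (Suc i))"
  proof -
    have "(\<Sum>i\<le>Suc p. (-1)^i * of_nat (Suc p choose i) * g i) =
       g 0 + (\<Sum>i\<le>p. (-1)^(Suc i) * of_nat (Suc p choose Suc i) * g (Suc i))"
      by (subst sum.atMost_Suc_shift) simp
    also have "(\<Sum>i\<le>p. (-1)^(Suc i) * of_nat (Suc p choose Suc i) * g (Suc i)) =
      (\<Sum>i\<le>p. - ((-1)^i * of_nat (p choose i) * g (Suc i)) - (-1)^i * of_nat (p choose Suc i) * g (Suc i))"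
      by (rule sum.cong, simp_all add: algebra_simps)
    also have "\<dots> = - (\<Sum>i\<le>p. (-1)^i * of_nat (p choose i) * g (Suc i)) - (\<Sum>i\<le>p. (-1)^i * of_nat (p choose Suc i) * g (Suc i))"
      by (simp add: sum_subtractf sum_negf)
    finally show ?thesis by simp
  qed
  have B: "(\<Sum>i\<le>p. (-1)^i * of_nat (p choose i) * g i) =
     g 0 - (\<Sum>i\<le>p. (-1)^i * of_nat (p choose Suc i) * g (Suc i))"
  proof -
    have "(\<Sum>i\<le>p. (-1)^i * of_nat (p choose i) * g i) = (\<Sum>i\<le>Suc p. (-1)^i * of_nat (p choose i) * g i)"
      by (simp add: binomial_eq_0)
    also have "\<dots> = g 0 - (\<Sum>i\<le>p. (-1)^i * of_nat (p choose Suc i) * g (Suc i))"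
      by (subst sum.atMost_Suc_shift) (simp add: sum_negf)
    finally show ?thesis .
  qed
  show ?thesis unfolding A using B by (simp add: algebra_simps sum_subtractf)
qed

lemma binom_aux: assumes "k \<ge> 1" "q \<ge> 1"
  shows "(k*q - 1 choose q) = (k - 1) * (k*q - 1 choose (q - 1))"
proof (cases "k = 1")
  case True thus ?thesis using assms by simp
next
  case False
  hence k2: "k \<ge> 2" using assms by auto
  define a where "a = q - 1"
  define b where "b = k*q - 1 - q"
  have q: "q = Suc a" using assms a_def by auto
  have kq2: "k*q \<ge> 2*q" using k2 by simp
  have kq: "k*q - 1 = Suc (a + b)" using kq2 assms unfolding a_def b_def by linarith
  have sb: "Suc b = (k - 1) * q"
    proof -
    have "Suc b = k*q - q" using kq2 assms unfolding b_def by linarith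
    also have "\<dots> = (k-1)*q" by (simp add: diff_mult_distrib)
    finally show ?thesis .
  qed
  have "Suc a * (Suc(a+b) choose Suc a) = Suc b * (Suc(a+b) choose a)"
    by (rule Suc_times_binomial_add)
  hence "q * (k*q - 1 choose q) = Suc b * (k*q - 1 choose a)"
    unfolding kq[symmetric] q[symmetric] .
  hence "q * (k*q - 1 choose q) = Suc b * (k*q - 1 choose (q-1))" using a_def by simp
  hence "q * (k*q - 1 choose q) = q * ((k - 1) * (k*q - 1 choose (q-1)))"
    unfolding sb by (simp only: mult_ac)
  thus ?thesis using assms(2) by (metis mult_left_cancel not_one_le_zero)
qed

lemma err_sum: assumes k: "k \<ge> 1"
  shows "(\<Sum>i\<le>p. (-1)^i * of_nat (p choose i) * EE k (int (Suc p) - int k * int i)) = 0"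
proof (cases "k dvd Suc p")
  case True
  then obtain q where q: "Suc p = k * q" by (auto elim: dvdE)
  have q1: "q \<ge> 1" using q by (cases q) auto
  have c1: "int (Suc p) - int k * int i = 0 \<longleftrightarrow> i = q" for i
  proof -
    have "int (Suc p) - int k * int i = 0 \<longleftrightarrow> k * q = k * i" unfolding q
      by (metis eq_iff_diff_eq_0 of_nat_eq_iff of_nat_mult)
    thus ?thesis using k by auto
  qed
  have c2: "int (Suc p) - int k * int i = int k \<longleftrightarrow> i = q - 1" for i
  proof -
    have "int (Suc p) - int k * int i = int k \<longleftrightarrow> k * q = k * Suc i" unfolding q
      by (auto simp: algebra_simps) (metis of_nat_eq_iff of_nat_mult of_nat_add add.commute mult.commute, 
          metis of_nat_add of_nat_mult)
    also have "\<dots> \<longleftrightarrow> q = Suc i" using k by (simp only: mult_cancel1) simp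
    also have "\<dots> \<longleftrightarrow> i = q - 1" using q1 by auto
    finally show ?thesis .
  qed
  have "(\<Sum>i\<le>p. (-1)^i * of_nat (p choose i) * EE k (int (Suc p) - int k * int i)) =
     (\<Sum>i\<le>p. (if i = q then (-1)^q * of_nat (p choose q) else 0) +
              (if i = q - 1 then (-1)^(q-1) * of_nat (p choose (q-1)) * of_nat (k-1) else 0))"
    by (rule sum.cong, simp, simp only: EE_def c1 c2, insert q1, auto)
  also have "\<dots> = (if q \<le> p then (-1)^q * of_nat (p choose q) else 0) +
        (-1)^(q-1) * of_nat (p choose (q-1)) * of_nat (k-1)"
    using q q1 k by (simp add: sum.distrib)
  also have "(if q \<le> p then (-1)^q * of_nat (p choose q) else 0) = ((-1)^q * of_nat (p choose q) :: int poly)"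
    by (simp add: binomial_eq_0)
  also have "(-1)^q * of_nat (p choose q) + (-1)^(q-1) * of_nat (p choose (q-1)) * of_nat (k-1) = (0::int poly)"
  proof -
    have pe: "p = k*q - 1" using q by simp
    have e: "(-1::int poly)^q = - ((-1)^(q-1))" using q1 by (cases q) auto
    show ?thesis unfolding pe binom_aux[OF k q1] of_nat_mult e by (simp add: mult_ac)
  qed
  finally show ?thesis .
next
  case False
  have "int (Suc p) - int k * int i \<noteq> 0" "int (Suc p) - int k * int i \<noteq> int k" for i
  proof -
    show "int (Suc p) - int k * int i \<noteq> 0"
    proof
      assume "int (Suc p) - int k * int i = 0"
      hence "Suc p = k * i" by (metis eq_iff_diff_eq_0 of_nat_eq_iff of_nat_mult)
      thus False using False by auto
    qed
    show "int (Suc p) - int k * int i \<noteq> int k"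
    proof
      assume "int (Suc p) - int k * int i = int k"
      hence "int (Suc p) = int (k * Suc i)" by (simp add: algebra_simps)
      hence "Suc p = k * Suc i" by (simp only: of_nat_eq_iff)
      thus False using False by auto
    qed
  qed
  thus ?thesis by (simp add: EE_def)
qed

definition SS :: "nat \<Rightarrow> nat \<Rightarrow> int poly" where
  "SS k n = (\<Sum>i\<le>n. (-1)^i * of_nat (n choose i) * Lp k (int n - int k * int i))"

lemma SS_eq: assumes k: "k \<ge> 1" shows "SS k n = XX ^ n"
proof (induction n)
  case 0 thus ?case by (simp add: SS_def Lp_def)
next
  case (Suc p)
  have "SS k (Suc p) = (\<Sum>i\<le>p. (-1)^i * of_nat (p choose i) *
      (Lp k (int (Suc p) - int k * int i) - Lp k (int (Suc p) - int k * int (Suc i))))"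
    unfolding SS_def by (rule pascal_sum)
  also have "\<dots> = (\<Sum>i\<le>p. XX * ((-1)^i * of_nat (p choose i) * Lp k (int p - int k * int i)) +
      (-1)^i * of_nat (p choose i) * EE k (int (Suc p) - int k * int i))"
  proof (rule sum.cong, simp)
    fix i
    have "Lp k (int (Suc p) - int k * int i) = XX * Lp k (int (Suc p) - int k * int i - 1)
       + Lp k (int (Suc p) - int k * int i - int k) + EE k (int (Suc p) - int k * int i)"
      by (rule Lp_rec[OF k])
    moreover have "int (Suc p) - int k * int i - 1 = int p - int k * int i" by simp
    moreover have "int (Suc p) - int k * int i - int k = int (Suc p) - int k * int (Suc i)"
      by (simp add: algebra_simps)
    ultimately show "(-1)^i * of_nat (p choose i) *
      (Lp k (int (Suc p) - int k * int i) - Lp k (int (Suc p) - int k * int (Suc i))) =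
      XX * ((-1)^i * of_nat (p choose i) * Lp k (int p - int k * int i)) +
      (-1)^i * of_nat (p choose i) * EE k (int (Suc p) - int k * int i)"
      by (simp only:) (simp add: algebra_simps)
  qed
  also have "\<dots> = XX * SS k p"
    unfolding sum.distrib err_sum[OF k] SS_def sum_distrib_left by simp
  finally show ?case using Suc by simp
qed



lemma SS_spec: assumes k: "k \<ge> 1" and r: "r < k"
  shows "(\<Sum>j\<le>m. (-1)^(m-j) * of_nat ((k*m+r) choose (m-j)) * Lp k (int k * int j + int r)) = XX^(k*m+r)"
proof -
  let ?n = "k*m+r"
  let ?f = "\<lambda>i. (-1)^i * of_nat (?n choose i) * Lp k (int ?n - int k * int i)"
  have "SS k ?n = (\<Sum>i\<le>m. ?f i)"
    unfolding SS_def
  proof (rule sum.mono_neutral_right)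
    show "finite {..?n}" by simp
    have h: "m \<le> k*m+r" using mult_le_mono1[of 1 k m] k by linarith
    show "{..m} \<subseteq> {..?n}" unfolding atMost_subset_iff by (rule h)
    show "\<forall>i\<in>{..?n} - {..m}. ?f i = 0"
    proof
      fix i assume "i \<in> {..?n} - {..m}"
      hence "i \<ge> Suc m" by auto
      hence "k * Suc m \<le> k * i" by (rule mult_le_mono2)
      hence "int (k * Suc m) \<le> int (k * i)" by (simp only: of_nat_le_iff)
      hence "int k * int i \<ge> int k * int m + int k" by (simp add: algebra_simps)
      hence "int ?n - int k * int i < 0" using r by simp
      thus "?f i = 0" by (simp add: Lp_def)
    qed
  qed
  also have "\<dots> = (\<Sum>j\<le>m. ?f (m - j))"
    using sum.atLeastAtMost_rev[of ?f 0 m] by (simp add: atMost_atLeast0)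
  also have "\<dots> = (\<Sum>j\<le>m. (-1)^(m-j) * of_nat ((k*m+r) choose (m-j)) * Lp k (int k * int j + int r))"
  proof (rule sum.cong, simp)
    fix j assume "j \<in> {..m}"
    hence e: "int k*int m + int r - int k * int (m-j) = int k * int j + int r"
      by (simp add: of_nat_diff algebra_simps)
    thus "?f (m - j) = (-1)^(m-j) * of_nat ((k*m+r) choose (m-j)) * Lp k (int k * int j + int r)"
      by (simp add: e)
  qed
  finally show ?thesis using SS_eq[OF k] by simp
qed

definition fC :: "nat \<Rightarrow> nat \<Rightarrow> nat \<Rightarrow> nat \<Rightarrow> int poly" where
  "fC k r i j = smult (binom_int (k * i + r) (int i - int j)) (monom 1 k)
      + [: binom_int (k * (i + 1) + r) (int i - int j + 1) :]"

lemma C_mat_fC: "C_mat k r n = mat n n (\<lambda>(i,j). fC k r i j)"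
  unfolding C_mat_def fC_def by simp

lemma fC_sup: "fC k r i (Suc i) = 1"
  by (simp add: fC_def binom_int_def one_pCons)

lemma fC_zer: "c > Suc i \<Longrightarrow> fC k r i c = 0"
  by (simp add: fC_def binom_int_def)

lemma binom_int_nat: "binom_int n (int d) = int (n choose d)"
  by (simp add: binom_int_def)

lemma fC_val: assumes "j \<le> m"
  shows "fC k r m j = of_nat ((k*m+r) choose (m-j)) * XX^k + of_nat ((k*Suc m+r) choose (Suc m - j))"
proof -
  have a: "binom_int (k * m + r) (int m - int j) = int ((k*m+r) choose (m-j))"
  proof -
    have e: "int m - int j = int (m - j)" using assms by simp
    show ?thesis unfolding e by (rule binom_int_nat)
  qed
  have b: "binom_int (k * (m + 1) + r) (int m - int j + 1) = int ((k*Suc m+r) choose (Suc m - j))"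
  proof -
    have e: "int m - int j + 1 = int (Suc m - j)" using assms by simp
    have e2: "k * (m + 1) = k * Suc m" by simp
    show ?thesis unfolding e e2 by (rule binom_int_nat)
  qed
  have c: "smult (int c) (monom 1 k) = of_nat c * XX^k" for c
    by (simp add: monom1 of_nat_poly)
  have d: "[:int c:] = of_nat c" for c
    by (simp add: of_nat_poly)
  show ?thesis unfolding fC_def a b c d ..
qed

definition DD where "DD k r m = det (C_mat k r m)"

lemma sign_eq: "j \<le> m \<Longrightarrow> (-1::'a::comm_ring_1)^(m+j) = (-1)^(m-j)"
proof -
  assume "j \<le> m"
  hence e: "m + j = (m - j) + 2 * j" by simp
  have "(-1::'a)^(m+j) = (-1)^((m-j) + 2*j)" unfolding e ..
  also have "\<dots> = (-1)^(m-j)" by (simp add: power_add power_mult)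
  finally show ?thesis .
qed

lemma DD_rec: "DD k r (Suc m) = (\<Sum>j\<le>m. (-1)^(m-j) *
   (of_nat ((k*m+r) choose (m-j)) * XX^k + of_nat ((k*Suc m+r) choose (Suc m - j))) * DD k r j)"
proof -
  have "det (mat (Suc m) (Suc m) (\<lambda>(i,j). fC k r i j)) =
     (\<Sum>j\<le>m. (-1)^(m+j) * fC k r m j * det (mat j j (\<lambda>(i,j). fC k r i j)))"
    by (rule hess_det, rule fC_sup, rule fC_zer)
  thus ?thesis unfolding DD_def C_mat_fC
    by (simp add: sign_eq fC_val)
qed

definition TT where "TT k r m = (\<Sum>j\<le>m. (-1)^(m-j) * of_nat ((k*m+r) choose (m-j)) * DD k r j)"

lemma TT_eq: "TT k r m = XX^(k*m)"
proof (induction m)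
  case 0 thus ?case by (simp add: TT_def DD_def C_mat_def)
next
  case (Suc m)
  have "TT k r (Suc m) = DD k r (Suc m) +
     (\<Sum>j\<le>m. - ((-1)^(m-j) * of_nat ((k*Suc m+r) choose (Suc m - j)) * DD k r j))"
    unfolding TT_def
    by (subst sum.atMost_Suc, simp, rule sum.cong, auto simp: Suc_diff_le)
  also have "DD k r (Suc m) = XX^k * TT k r m +
     (\<Sum>j\<le>m. (-1)^(m-j) * of_nat ((k*Suc m+r) choose (Suc m - j)) * DD k r j)"
    unfolding DD_rec TT_def sum_distrib_left sum.distrib[symmetric]
    by (rule sum.cong, simp, simp add: algebra_simps)
  finally have "TT k r (Suc m) = XX^k * TT k r m"
    by (simp add: sum_negf)
  thus ?case using Suc by (simp add: power_add)
qed

lemma uniq: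
  fixes U V :: "nat \<Rightarrow> 'a::comm_ring_1"
  assumes "\<And>m. (\<Sum>j\<le>m. a m j * U j) = (\<Sum>j\<le>m. a m j * V j)" and "\<And>m. a m m = 1"
  shows "U m = V m"
proof (induction m rule: less_induct)
  case (less m)
  have "(\<Sum>j<m. a m j * U j) = (\<Sum>j<m. a m j * V j)"
    by (rule sum.cong, auto simp: less)
  with assms(1)[of m] show ?case
    unfolding lessThan_Suc_atMost[symmetric] sum.lessThan_Suc assms(2) by simp
qed

theorem theorem3:
  fixes k r n :: nat
  assumes "k \<ge> 1" and "r < k" and "n \<ge> 1"
  shows "monom 1 r * det (C_mat k r n) = gen_lucas k (k * n + r)"
proof -
  have "XX^r * DD k r n = Lp k (int k * int n + int r)"
  proof (rule uniq[where a="\<lambda>m j. (-1)^(m-j) * of_nat ((k*m+r) choose (m-j))"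
     and U="\<lambda>j. XX^r * DD k r j" and V="\<lambda>j. Lp k (int k * int j + int r)" and m=n])
    fix m
    have "(\<Sum>j\<le>m. (-1)^(m-j) * of_nat ((k*m+r) choose (m-j)) * (XX^r * DD k r j)) = XX^r * TT k r m"
      unfolding TT_def sum_distrib_left by (rule sum.cong, simp_all add: algebra_simps)
    also have "\<dots> = XX^(k*m+r)" by (simp add: TT_eq power_add)
    also have "\<dots> = (\<Sum>j\<le>m. (-1)^(m-j) * of_nat ((k*m+r) choose (m-j)) * Lp k (int k * int j + int r))"
      using SS_spec[OF assms(1,2)] by simp
    finally show "(\<Sum>j\<le>m. (-1)^(m-j) * of_nat ((k*m+r) choose (m-j)) * (XX^r * DD k r j)) = \<dots>" .
  qed simp
  moreover have "Lp k (int k * int n + int r) = gen_lucas k (k * n + r)"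
  proof -
    have "k * n \<ge> 1" using assms by simp
    have e: "int k * int n + int r = int (k*n+r)" by simp
    have "int (k*n+r) > 0" using \<open>k*n \<ge> 1\<close> by linarith
    hence "int k * int n + int r > 0" unfolding e .
    moreover have "nat (int k * int n + int r) = k*n+r" unfolding e nat_int ..
    ultimately show ?thesis by (simp add: Lp_def)
  qed
  ultimately show ?thesis by (simp add: monom1 DD_def)
qed


end
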